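(* Let $N\geq3$ and $\alpha\in\{+,0,-\}$. For all integers $n,m$ such that none of $n+m$, $n-m$ is divisible by $2N$, $$[H^0_n,W^{\alpha,0}_m]=2\sin\!\Bigl(\pi\tfrac{2n-m}{2N}\Bigr)W^{\alpha,1}_{n+m}+2\sin\!\Bigl(\pi\tfrac{2n+m}{2N}\Bigr)W^{\alpha,1}_{n-m}.$$
   Context: On $\mathcal{H}_N=(\mathbb{C}^2)^{\otimes N}$ let $c_j^\dagger=i^{j-1}\,i^{\sigma^z_1+\dots+\sigma^z_{j-1}}\sigma^+_j$, $c_j=i^{-j+1}\,i^{-\sigma^z_1-\dots-\sigma^z_{j-1}}\sigma^-_j$ (Jordan–Wigner fermions). Let $e_j=c_jc_{j+1}^\dagger+c_{j+1}c_j^\dagger+i(c_j^\dagger c_j-c_{j+1}^\dagger c_{j+1})$ ($1\le j\le N-1$), and for $1\leq j\leq N-2$: $W\!B^+_j=(-1)^j(c_j^\dagger c_{j+1}^\dagger+ic_j^\dagger c_{j+2}^\dagger-c_{j+1}^\dagger c_{j+2}^\dagger)$, $W\!B^0_j=-\tfrac12(1+ic_j^\dagger c_{j+1}-c_j^\dagger c_{j+2}+ic_{j+1}^\dagger c_j-2c_{j+1}^\dagger c_{j+1}-ic_{j+1}^\dagger c_{j+2}-c_{j+2}^\dagger c_j-ic_{j+2}^\dagger c_{j+1})$, $W\!B^-_j=(-1)^{j+1}(c_jc_{j+1}+ic_jc_{j+2}-c_{j+1}c_{j+2})$. Set $H^0_n=\sum_{j=1}^{N-1}\cos(\pi nj/N)e_j$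 and $W^{\alpha,0}_n=\sum_{j=1}^{N-2}\cos\bigl(\pi n(j+\tfrac12)/N\bigr)W\!B^\alpha_j$ for $n\in\mathbb{Z}$, and for $k\in\mathbb{Z}$ not divisible by $2N$ define $W^{\alpha,1}_k$ by $[H^0_0,W^{\alpha,0}_k]=-4\sin(\pi\tfrac{k}{2N})W^{\alpha,1}_k$. *)

theory Defs
  imports Complex_Main "HOL-Library.Function_Algebras"
begin

text \<open>Operators on (C^2)^(tensor N) are represented as 2^N x 2^N complex matrices,
  given as functions nat => nat => complex on computational basis indices a < 2^N,
  all entries outside the range {0..<2^N} being zero.
  Site j (1-indexed) corresponds to bit (j-1) of the basis index;
  bit value 1 means spin up (sigma^z = +1), bit value 0 means spin down.\<close>

type_synonym op = "nat \<Rightarrow> nat \<Rightarrow> complex"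

definition bit_at :: "nat \<Rightarrow> nat \<Rightarrow> bool" where
  "bit_at a j = odd (a div 2 ^ (j - 1))"

definition sz :: "nat \<Rightarrow> nat \<Rightarrow> int" where
  "sz a j = (if bit_at a j then 1 else -1)"

definition opmul :: "nat \<Rightarrow> op \<Rightarrow> op \<Rightarrow> op" where
  "opmul N A B = (\<lambda>a b. \<Sum>k<2 ^ N. A a k * B k b)"

definition opid :: "nat \<Rightarrow> op" where
  "opid N = (\<lambda>a b. if a = b \<and> a < 2 ^ N then 1 else 0)"

definition smul :: "complex \<Rightarrow> op \<Rightarrow> op" where
  "smul c A = (\<lambda>a b. c * A a b)"

definition comm :: "nat \<Rightarrow> op \<Rightarrow> op \<Rightarrow> op" where
  "comm N A B = opmul N A B - opmul N B A"

definition sigma_plus :: "nat \<Rightarrow> nat \<Rightarrow> op" where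
  "sigma_plus N j = (\<lambda>a b. if a < 2 ^ N \<and> b < 2 ^ N \<and> \<not> bit_at b j \<and> a = b + 2 ^ (j - 1)
                            then 1 else 0)"

definition sigma_minus :: "nat \<Rightarrow> nat \<Rightarrow> op" where
  "sigma_minus N j = (\<lambda>a b. sigma_plus N j b a)"

definition cdag :: "nat \<Rightarrow> nat \<Rightarrow> op" where
  "cdag N j = (\<lambda>a b. \<i> powi (int j - 1 + (\<Sum>k\<in>{1..<j}. sz a k)) * sigma_plus N j a b)"

definition cann :: "nat \<Rightarrow> nat \<Rightarrow> op" where
  "cann N j = (\<lambda>a b. \<i> powi (- int j + 1 - (\<Sum>k\<in>{1..<j}. sz a k)) * sigma_minus N j a b)"

definition e_op :: "nat \<Rightarrow> nat \<Rightarrow> op" where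
  "e_op N j = opmul N (cann N j) (cdag N (j+1)) + opmul N (cann N (j+1)) (cdag N j)
     + smul \<i> (opmul N (cdag N j) (cann N j) - opmul N (cdag N (j+1)) (cann N (j+1)))"

datatype alpha = APlus | AZero | AMinus

definition WB :: "nat \<Rightarrow> alpha \<Rightarrow> nat \<Rightarrow> op" where
  "WB N \<alpha> j = (case \<alpha> of
     APlus \<Rightarrow> smul ((-1) ^ j)
        (opmul N (cdag N j) (cdag N (j+1)) + smul \<i> (opmul N (cdag N j) (cdag N (j+2)))
         - opmul N (cdag N (j+1)) (cdag N (j+2)))
   | AZero \<Rightarrow> smul (-1/2)
        (opid N + smul \<i> (opmul N (cdag N j) (cann N (j+1)))
         - opmul N (cdag N j) (cann N (j+2))
         + smul \<i> (opmul N (cdag N (j+1)) (cann N j))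
         - smul 2 (opmul N (cdag N (j+1)) (cann N (j+1)))
         - smul \<i> (opmul N (cdag N (j+1)) (cann N (j+2)))
         - opmul N (cdag N (j+2)) (cann N j)
         - smul \<i> (opmul N (cdag N (j+2)) (cann N (j+1))))
   | AMinus \<Rightarrow> smul ((-1) ^ (j+1))
        (opmul N (cann N j) (cann N (j+1)) + smul \<i> (opmul N (cann N j) (cann N (j+2)))
         - opmul N (cann N (j+1)) (cann N (j+2))))"

definition H0 :: "nat \<Rightarrow> int \<Rightarrow> op" where
  "H0 N n = (\<Sum>j\<in>{1..N-1}. smul (of_real (cos (pi * real_of_int n * real j / real N))) (e_op N j))"

definition W0 :: "nat \<Rightarrow> alpha \<Rightarrow> int \<Rightarrow> op" where
  "W0 N \<alpha> n = (\<Sum>j\<in>{1..N-2}.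
      smul (of_real (cos (pi * real_of_int n * (real j + 1/2) / real N))) (WB N \<alpha> j))"

text \<open>W^{alpha,1}_k is defined (for 2N not dividing k) by
  [H^0_0, W^{alpha,0}_k] = -4 sin(pi k/(2N)) W^{alpha,1}_k.\<close>
definition W1 :: "nat \<Rightarrow> alpha \<Rightarrow> int \<Rightarrow> op" where
  "W1 N \<alpha> k = smul (of_real (-1 / (4 * sin (pi * real_of_int k / (2 * real N)))))
                   (comm N (H0 N 0) (W0 N \<alpha> k))"

end

theory Submission
  imports Defs
begin


definition supp :: "nat \<Rightarrow> op \<Rightarrow> bool" where
  "supp N A \<longleftrightarrow> (\<forall>a b. (2^N \<le> a \<or> 2^N \<le> b) \<longrightarrow> A a b = 0)"

lemma op_eqI: "(\<And>a b. A a b = B a b) \<Longrightarrow> A = (B::op)" by (intro ext)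

lemma minus_fun_apply2: "(A - B) a b = A a b - (B::op) a b" by simp
lemma uminus_fun_apply2: "(- A) a b = - (A::op) a b" by simp

lemma sum_op_apply: "(sum (f::'i \<Rightarrow> op) S) a b = (\<Sum>i\<in>S. f i a b)"
  by (induction S rule: infinite_finite_induct) auto

lemma opmul_assoc: "opmul N (opmul N A B) C = opmul N A (opmul N B C)"
proof (intro ext)
  fix a b
  have "opmul N (opmul N A B) C a b = (\<Sum>k<2^N. \<Sum>l<2^N. A a l * B l k * C k b)"
    unfolding opmul_def by (simp add: sum_distrib_right)
  also have "\<dots> = (\<Sum>l<2^N. \<Sum>k<2^N. A a l * B l k * C k b)" by (rule sum.swap)
  also have "\<dots> = opmul N A (opmul N B C) a b"
    unfolding opmul_def by (simp add: sum_distrib_left mult.assoc)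
  finally show "opmul N (opmul N A B) C a b = opmul N A (opmul N B C) a b" .
qed

lemma opmul_add_left: "opmul N (A + B) C = opmul N A C + opmul N B C"
  unfolding opmul_def plus_fun_def by (simp add: distrib_right sum.distrib)
lemma opmul_add_right: "opmul N A (B + C) = opmul N A B + opmul N A C"
  unfolding opmul_def plus_fun_def by (simp add: distrib_left sum.distrib)
lemma opmul_diff_left: "opmul N (A - B) C = opmul N A C - opmul N B C"
  unfolding opmul_def fun_diff_def by (simp add: left_diff_distrib sum_subtractf)
lemma opmul_diff_right: "opmul N A (B - C) = opmul N A B - opmul N A C"
  unfolding opmul_def fun_diff_def by (simp add: right_diff_distrib sum_subtractf)
lemma opmul_uminus_left: "opmul N (- A) C = - opmul N A C"
  unfolding opmul_def fun_Compl_def by (simp add: sum_negf)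
lemma opmul_uminus_right: "opmul N A (- C) = - opmul N A C"
  unfolding opmul_def fun_Compl_def by (simp add: sum_negf)
lemma opmul_zero_left[simp]: "opmul N 0 C = 0"
  unfolding opmul_def zero_fun_def by simp
lemma opmul_zero_right[simp]: "opmul N A 0 = 0"
  unfolding opmul_def zero_fun_def by simp
lemma opmul_smul_left: "opmul N (smul c A) C = smul c (opmul N A C)"
  unfolding opmul_def smul_def by (simp add: sum_distrib_left mult.assoc)
lemma opmul_smul_right: "opmul N A (smul c C) = smul c (opmul N A C)"
  unfolding opmul_def smul_def by (simp add: sum_distrib_left mult.left_commute)
lemma opmul_sum_left: "opmul N (sum f S) C = (\<Sum>i\<in>S. opmul N (f i) C)"
  using sum_comp_morphism[of "\<lambda>X. opmul N X C" f S] by (simp add: opmul_zero_left opmul_add_left o_def)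
lemma opmul_sum_right: "opmul N A (sum f S) = (\<Sum>i\<in>S. opmul N A (f i))"
  using sum_comp_morphism[of "\<lambda>X. opmul N A X" f S] by (simp add: opmul_zero_right opmul_add_right o_def)

lemma smul_add: "smul c (A + B) = smul c A + smul c B"
  unfolding smul_def plus_fun_def by (simp add: distrib_left)
lemma smul_diff: "smul c (A - B) = smul c A - smul c B"
  unfolding smul_def fun_diff_def by (simp add: right_diff_distrib)
lemma smul_uminus: "smul c (- B) = - smul c B"
  unfolding smul_def fun_Compl_def zero_fun_def by simp
lemma smul_smul: "smul c (smul d A) = smul (c*d) A"
  unfolding smul_def by (simp add: mult.assoc)
lemma smul_zero[simp]: "smul c 0 = 0" unfolding smul_def fun_Compl_def zero_fun_def by simp
lemma smul_0[simp]: "smul 0 A = 0" unfolding smul_def fun_Compl_def zero_fun_def by simp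
lemma smul_1[simp]: "smul 1 A = A" unfolding smul_def fun_Compl_def zero_fun_def by simp
lemma smul_sum: "smul c (sum f S) = (\<Sum>i\<in>S. smul c (f i))"
  using sum_comp_morphism[of "smul c" f S] by (simp add: smul_zero smul_add o_def)
lemma smul_apply: "smul c A a b = c * A a b" by (simp add: smul_def)

lemma supp_opmul[simp]: "supp N A \<Longrightarrow> supp N B \<Longrightarrow> supp N (opmul N A B)"
  unfolding supp_def opmul_def by auto
lemma supp_add[simp]: "supp N A \<Longrightarrow> supp N B \<Longrightarrow> supp N (A + B)"
  unfolding supp_def by auto
lemma supp_diff[simp]: "supp N A \<Longrightarrow> supp N B \<Longrightarrow> supp N (A - B)"
  unfolding supp_def by auto
lemma supp_uminus[simp]: "supp N A \<Longrightarrow> supp N (- A)"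
  unfolding supp_def by auto
lemma supp_smul[simp]: "supp N A \<Longrightarrow> supp N (smul c A)"
  unfolding supp_def smul_def by auto
lemma supp_opid[simp]: "supp N (opid N)"
  unfolding supp_def opid_def by auto

lemma opmul_opid_right: "supp N A \<Longrightarrow> opmul N A (opid N) = A"
proof (intro ext)
  fix a b assume s: "supp N A"
  show "opmul N A (opid N) a b = A a b"
  proof (cases "b < 2^N")
    case True
    have "opmul N A (opid N) a b = (\<Sum>k<2^N. if k = b then A a k else 0)"
      unfolding opmul_def opid_def by (intro sum.cong) auto
    also have "\<dots> = A a b" using True by (simp add: sum.delta)
    finally show ?thesis .
  next
    case False then show ?thesis using s unfolding supp_def opmul_def opid_def by auto
  qed
qed

lemma opmul_opid_left: "supp N A \<Longrightarrow> opmul N (opid N) A = A"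
proof (intro ext)
  fix a b assume s: "supp N A"
  show "opmul N (opid N) A a b = A a b"
  proof (cases "a < 2^N")
    case True
    have "opmul N (opid N) A a b = (\<Sum>k<2^N. if a = k then A k b else 0)"
      unfolding opmul_def opid_def by (intro sum.cong) auto
    also have "\<dots> = A a b" using True by (simp add: sum.delta)
    finally show ?thesis .
  next
    case False then show ?thesis using s unfolding supp_def opmul_def opid_def by auto
  qed
qed

lemma comm_add_left: "comm N (A + B) C = comm N A C + comm N B C"
  by (simp add: comm_def opmul_add_left opmul_add_right)
lemma comm_add_right: "comm N C (A + B) = comm N C A + comm N C B"
  by (simp add: comm_def opmul_add_left opmul_add_right)
lemma comm_diff_left: "comm N (A - B) C = comm N A C - comm N B C"
  by (simp add: comm_def opmul_diff_left opmul_diff_right)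
lemma comm_diff_right: "comm N C (A - B) = comm N C A - comm N C B"
  by (simp add: comm_def opmul_diff_left opmul_diff_right)
lemma comm_uminus_left: "comm N (- A) C = - comm N A C"
  by (simp add: comm_def opmul_uminus_left opmul_uminus_right)
lemma comm_uminus_right: "comm N C (- A) = - comm N C A"
  by (simp add: comm_def opmul_uminus_left opmul_uminus_right)
lemma comm_smul_left: "comm N (smul c A) C = smul c (comm N A C)"
  by (simp add: comm_def opmul_smul_left opmul_smul_right smul_diff)
lemma comm_smul_right: "comm N C (smul c A) = smul c (comm N C A)"
  by (simp add: comm_def opmul_smul_left opmul_smul_right smul_diff)
lemma comm_zero_left[simp]: "comm N 0 C = 0" by (simp add: comm_def)
lemma comm_zero_right[simp]: "comm N C 0 = 0" by (simp add: comm_def)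
lemma comm_sum_left: "comm N (sum f S) C = (\<Sum>i\<in>S. comm N (f i) C)"
  using sum_comp_morphism[of "\<lambda>X. comm N X C" f S] by (simp add: comm_zero_left comm_add_left o_def)
lemma comm_sum_right: "comm N C (sum f S) = (\<Sum>i\<in>S. comm N C (f i))"
  using sum_comp_morphism[of "\<lambda>X. comm N C X" f S] by (simp add: comm_zero_right comm_add_right o_def)
lemma comm_opid_right: "supp N A \<Longrightarrow> comm N A (opid N) = 0"
  by (simp add: comm_def opmul_opid_left opmul_opid_right)



definition cnt :: "nat \<Rightarrow> nat \<Rightarrow> nat" where
  "cnt b t = card {k. k < t \<and> bit b k}"

definition sg :: "nat \<Rightarrow> nat \<Rightarrow> complex" where
  "sg b t = (-1) ^ cnt b t"

lemma cnt_Suc: "cnt b (Suc t) = cnt b t + (if bit b t then 1 else 0)"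
proof -
  have "{k. k < Suc t \<and> bit b k} = {k. k < t \<and> bit b k} \<union> (if bit b t then {t} else {})"
    by (auto simp: less_Suc_eq)
  moreover have "finite {k. k < t \<and> bit b k}" by simp
  ultimately show ?thesis unfolding cnt_def by (auto simp: card_insert_if less_Suc_eq)
qed

lemma bit_at_Suc: "bit_at a (Suc k) = bit a k"
  by (simp add: bit_at_def bit_iff_odd)

lemma sz_sum_Suc: "(\<Sum>k\<in>{1..<Suc t}. sz a k) = 2 * int (cnt a t) - int t"
proof (induction t)
  case 0 then show ?case by (simp add: cnt_def)
next
  case (Suc t)
  have "{1..<Suc (Suc t)} = insert (Suc t) {1..<Suc t}" by auto
  then have "(\<Sum>k\<in>{1..<Suc (Suc t)}. sz a k) = sz a (Suc t) + (\<Sum>k\<in>{1..<Suc t}. sz a k)"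
    by simp
  then show ?case using Suc by (simp add: sz_def bit_at_Suc cnt_Suc)
qed

lemma sz_sum: "(\<Sum>k\<in>{1..<j}. sz a k) = 2 * int (cnt a (j - 1)) - (int j - 1)" if "1 \<le> j"
  using sz_sum_Suc[of a "j - 1"] that by simp

lemma phase_dag: "1 \<le> j \<Longrightarrow> \<i> powi (int j - 1 + (\<Sum>k\<in>{1..<j}. sz a k)) = sg a (j - 1)"
proof -
  assume j: "1 \<le> j"
  have "int j - 1 + (\<Sum>k\<in>{1..<j}. sz a k) = int (2 * cnt a (j - 1))" using sz_sum[OF j] by simp
  then have "\<i> powi (int j - 1 + (\<Sum>k\<in>{1..<j}. sz a k)) = \<i> ^ (2 * cnt a (j - 1))"
    by (simp only: power_int_of_nat)
  also have "\<dots> = (-1) ^ cnt a (j - 1)" by (simp add: power_mult)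
  finally show ?thesis by (simp add: sg_def)
qed

lemma phase_ann: "1 \<le> j \<Longrightarrow> \<i> powi (- int j + 1 - (\<Sum>k\<in>{1..<j}. sz a k)) = sg a (j - 1)"
proof -
  assume j: "1 \<le> j"
  have "- int j + 1 - (\<Sum>k\<in>{1..<j}. sz a k) = - int (2 * cnt a (j - 1))" using sz_sum[OF j] by simp
  then have "\<i> powi (- int j + 1 - (\<Sum>k\<in>{1..<j}. sz a k)) = inverse (\<i> ^ (2 * cnt a (j - 1)))"
    by (simp only: power_int_of_nat power_int_minus)
  also have "\<dots> = (-1) ^ cnt a (j - 1)" by (simp add: power_mult power_inverse[symmetric])
  finally show ?thesis by (simp add: sg_def)
qed

lemma bit_lt_pow: "bit (b::nat) k \<Longrightarrow> b < 2^N \<Longrightarrow> k < N"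
proof (rule ccontr)
  assume "bit b k" "b < 2^N" "\<not> k < N"
  then have "b < 2^k" by (meson dual_order.strict_trans2 not_less one_le_numeral power_increasing)
  then have "b div 2^k = 0" by simp
  then show False using \<open>bit b k\<close> by (simp add: bit_iff_odd)
qed

lemma flip_lt: "b < 2^N \<Longrightarrow> t < N \<Longrightarrow> flip_bit t (b::nat) < 2^N"
proof -
  assume b: "b < 2^N" and t: "t < N"
  have "take_bit N (flip_bit t b) = flip_bit t b"
    by (rule bit_eqI) (auto simp: bit_simps dest: bit_lt_pow[OF _ b] intro: t)
  then show ?thesis by (simp add: take_bit_nat_eq_self_iff)
qed

lemma add_pow_flip: "\<not> bit (b::nat) t \<Longrightarrow> b + 2^t = flip_bit t b"
  by (simp add: flip_bit_eq_if set_bit_eq)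

lemma bit_flip: "bit (flip_bit t (b::nat)) k \<longleftrightarrow> (if k = t then \<not> bit b k else bit b k)"
  by (auto simp: bit_simps)

lemma flip_flip[simp]: "flip_bit t (flip_bit t (b::nat)) = b"
  by (rule bit_eqI) (auto simp: bit_simps)

lemma flip_comm: "flip_bit s (flip_bit t (b::nat)) = flip_bit t (flip_bit s b)"
  by (rule bit_eqI) (auto simp: bit_simps)

lemma cnt_flip: "cnt (flip_bit t b) s = (if t < s then (if bit b t then cnt b s - 1 else cnt b s + 1) else cnt b s)"
proof -
  have fin: "finite {k. k < s \<and> bit b k}" by simp
  show ?thesis
  proof (cases "t < s")
    case False
    then have "{k. k < s \<and> bit (flip_bit t b) k} = {k. k < s \<and> bit b k}"
      by (auto simp: bit_flip)
    then show ?thesis using False by (simp add: cnt_def)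
  next
    case True
    show ?thesis
    proof (cases "bit b t")
      case bt: True
      then have "{k. k < s \<and> bit (flip_bit t b) k} = {k. k < s \<and> bit b k} - {t}"
        by (auto simp: bit_flip)
      then show ?thesis using True bt fin by (simp add: cnt_def)
    next
      case bt: False
      then have "{k. k < s \<and> bit (flip_bit t b) k} = insert t {k. k < s \<and> bit b k}"
        using True by (auto simp: bit_flip)
      then show ?thesis using True bt fin by (simp add: cnt_def)
    qed
  qed
qed

lemma sg_flip: "sg (flip_bit t b) s = (if t < s then - sg b s else sg b s)"
proof (cases "t < s \<and> bit b t")
  case True
  then have "t \<in> {k. k < s \<and> bit b k}" by simp
  moreover have "finite {k. k < s \<and> bit b k}" by simp
  ultimately have "card {k. k < s \<and> bit b k} > 0" by (subst card_gt_0_iff) blast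
  then have "cnt b s \<ge> 1" unfolding cnt_def by simp
  then obtain c where c: "cnt b s = Suc c" by (cases "cnt b s") auto
  show ?thesis using True unfolding sg_def cnt_flip by (simp add: c)
next
  case False
  then show ?thesis unfolding sg_def cnt_flip by auto
qed

lemma sg_sq: "sg b s * sg b s = 1"
  unfolding sg_def by (simp flip: power_add add: mult_2[symmetric])



lemma cond_iff: "t < N \<Longrightarrow> (a < 2^N \<and> b < 2^N \<and> \<not> bit (b::nat) t \<and> a = b + 2^t) \<longleftrightarrow> (b < 2^N \<and> \<not> bit b t \<and> a = flip_bit t b)"
  by (auto simp: add_pow_flip flip_lt)

lemma cdag_eq: "t < N \<Longrightarrow> cdag N (Suc t) a b = (if b < 2^N \<and> \<not> bit b t \<and> a = flip_bit t b then sg b t else 0)"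
proof -
  assume t: "t < N"
  have ph: "\<i> powi (int (Suc t) - 1 + (\<Sum>k\<in>{1..<Suc t}. sz a k)) = sg a t"
    using phase_dag[of "Suc t" a] by simp
  have "cdag N (Suc t) a b = (if a < 2^N \<and> b < 2^N \<and> \<not> bit b t \<and> a = b + 2^t then sg a t else 0)"
    unfolding cdag_def sigma_plus_def using ph by (simp add: bit_at_Suc)
  also have "\<dots> = (if b < 2^N \<and> \<not> bit b t \<and> a = flip_bit t b then sg a t else 0)"
    by (simp only: cond_iff[OF t])
  also have "\<dots> = (if b < 2^N \<and> \<not> bit b t \<and> a = flip_bit t b then sg b t else 0)"
    by (auto simp: sg_flip)
  finally show ?thesis .
qed

lemma cann_eq: "t < N \<Longrightarrow> cann N (Suc t) a b = (if a < 2^N \<and> \<not> bit a t \<and> b = flip_bit t a then sg a t else 0)"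
proof -
  assume t: "t < N"
  have ph: "\<i> powi (- int (Suc t) + 1 - (\<Sum>k\<in>{1..<Suc t}. sz a k)) = sg a t"
    using phase_ann[of "Suc t" a] by simp
  have "cann N (Suc t) a b = (if b < 2^N \<and> a < 2^N \<and> \<not> bit a t \<and> b = a + 2^t then sg a t else 0)"
    unfolding cann_def sigma_minus_def sigma_plus_def using ph by (simp add: bit_at_Suc)
  also have "\<dots> = (if a < 2^N \<and> \<not> bit a t \<and> b = flip_bit t a then sg a t else 0)"
    by (simp only: cond_iff[OF t])
  finally show ?thesis .
qed

definition ferm :: "nat \<Rightarrow> bool \<Rightarrow> nat \<Rightarrow> op" where
  "ferm N p t = (if p then cdag N (Suc t) else cann N (Suc t))"

lemma ferm_col: "t < N \<Longrightarrow> ferm N p t k b = (if (b < 2^N \<and> bit b t \<noteq> p) \<and> k = flip_bit t b then sg b t else 0)"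
proof (cases p)
  case True
  assume t: "t < N"
  then show ?thesis using True by (simp add: ferm_def cdag_eq)
next
  case False
  assume t: "t < N"
  have "(k < 2^N \<and> \<not> bit k t \<and> b = flip_bit t k) \<longleftrightarrow> (b < 2^N \<and> bit b t \<and> k = flip_bit t b)"
    using flip_lt[OF _ t] by (auto simp: bit_flip)
  moreover have "k = flip_bit t b \<Longrightarrow> sg k t = sg b t" by (simp add: sg_flip)
  ultimately show ?thesis using False t by (auto simp: ferm_def cann_eq)
qed

lemma supp_ferm[simp]: "t < N \<Longrightarrow> supp N (ferm N p t)"
  unfolding supp_def
proof (intro allI impI)
  fix a b :: nat assume t: "t < N" and ab: "2 ^ N \<le> a \<or> 2 ^ N \<le> b"
  show "ferm N p t a b = 0"
    using ab flip_lt[OF _ t, of b] by (auto simp: ferm_col[OF t])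
qed

lemma ferm_prod: "s < N \<Longrightarrow> t < N \<Longrightarrow> opmul N (ferm N p s) (ferm N q t) a b =
  (if b < 2^N \<and> bit b t \<noteq> q \<and> bit (flip_bit t b) s \<noteq> p \<and> a = flip_bit s (flip_bit t b)
   then sg (flip_bit t b) s * sg b t else 0)"
proof -
  assume s: "s < N" and t: "t < N"
  have "opmul N (ferm N p s) (ferm N q t) a b =
        (\<Sum>k<2^N. if k = flip_bit t b then (if b < 2^N \<and> bit b t \<noteq> q then ferm N p s a k * sg b t else 0) else 0)"
    unfolding opmul_def by (intro sum.cong refl) (auto simp: ferm_col[OF t])
  also have "\<dots> = (if b < 2^N \<and> bit b t \<noteq> q then ferm N p s a (flip_bit t b) * sg b t else 0)"
    using flip_lt[OF _ t, of b] by (auto simp: sum.delta)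
  also have "\<dots> = (if b < 2^N \<and> bit b t \<noteq> q \<and> bit (flip_bit t b) s \<noteq> p \<and> a = flip_bit s (flip_bit t b)
   then sg (flip_bit t b) s * sg b t else 0)"
    using flip_lt[OF _ t, of b] by (auto simp: ferm_col[OF s])
  finally show ?thesis .
qed

lemma ferm_CAR: "s < N \<Longrightarrow> t < N \<Longrightarrow> opmul N (ferm N p s) (ferm N q t) + opmul N (ferm N q t) (ferm N p s)
   = smul (if p \<noteq> q \<and> s = t then 1 else 0) (opid N)"
proof (rule op_eqI)
  fix a b :: nat assume s: "s < N" and t: "t < N"
  show "(opmul N (ferm N p s) (ferm N q t) + opmul N (ferm N q t) (ferm N p s)) a b =
        smul (if p \<noteq> q \<and> s = t then 1 else 0) (opid N) a b"
  proof (cases "s = t")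
    case True
    then show ?thesis using s t
      by (auto simp: ferm_prod smul_def opid_def bit_flip sg_flip sg_sq)
  next
    case False
    have sg1: "sg (flip_bit t b) s * sg b t + sg (flip_bit s b) t * sg b s = 0"
      using False by (auto simp: sg_flip)
    show ?thesis using s t False sg1
      by (auto simp: ferm_prod smul_def opid_def bit_flip flip_comm)
  qed
qed



lemma comm4:
  assumes sx: "supp N x" and sy: "supp N y" and sz: "supp N z" and sw: "supp N w"
  and xz: "opmul N x z + opmul N z x = smul \<alpha> (opid N)"
  and yz: "opmul N y z + opmul N z y = smul \<beta> (opid N)"
  and xw: "opmul N x w + opmul N w x = smul \<gamma> (opid N)"
  and yw: "opmul N y w + opmul N w y = smul \<delta> (opid N)"
  shows "comm N (opmul N x y) (opmul N z w) =
     smul \<beta> (opmul N x w) - smul \<alpha> (opmul N y w) + smul \<delta> (opmul N z x) - smul \<gamma> (opmul N z y)"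
proof -
  let ?M = "opmul N"
  have yz': "?M y z = smul \<beta> (opid N) - ?M z y" using yz by (simp add: eq_diff_eq)
  have xz': "?M x z = smul \<alpha> (opid N) - ?M z x" using xz by (simp add: eq_diff_eq)
  have yw': "?M y w = smul \<delta> (opid N) - ?M w y" using yw by (simp add: eq_diff_eq)
  have xw': "?M x w = smul \<gamma> (opid N) - ?M w x" using xw by (simp add: eq_diff_eq)
  have s1: "?M (?M x y) (?M z w) = ?M x (?M (?M y z) w)" by (simp add: opmul_assoc)
  also have "\<dots> = smul \<beta> (?M x w) - ?M (?M x z) (?M y w)"
    unfolding yz' by (simp add: opmul_diff_left opmul_diff_right opmul_smul_left opmul_smul_right
        opmul_opid_left sw opmul_assoc)
  also have "?M (?M x z) (?M y w) = smul \<alpha> (?M y w) - ?M z (?M x (?M y w))"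
    unfolding xz' by (simp add: opmul_diff_left opmul_smul_left opmul_opid_left sy sw opmul_assoc)
  also have "?M x (?M y w) = smul \<delta> x - ?M (?M x w) y"
    unfolding yw' by (simp add: opmul_diff_right opmul_smul_right opmul_opid_right sx opmul_assoc)
  also have "?M (?M x w) y = smul \<gamma> y - ?M w (?M x y)"
    unfolding xw' by (simp add: opmul_diff_left opmul_smul_left opmul_opid_left sy opmul_assoc)
  finally have "?M (?M x y) (?M z w) = smul \<beta> (?M x w) - (smul \<alpha> (?M y w) -
      ?M z (smul \<delta> x - (smul \<gamma> y - ?M w (?M x y))))" .
  also have "\<dots> = smul \<beta> (?M x w) - smul \<alpha> (?M y w) + smul \<delta> (?M z x) - smul \<gamma> (?M z y)
      + ?M (?M z w) (?M x y)"
    by (simp add: opmul_diff_right opmul_smul_right opmul_assoc)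
  finally show ?thesis unfolding comm_def by simp
qed

definition ac :: "bool \<Rightarrow> nat \<Rightarrow> bool \<Rightarrow> nat \<Rightarrow> complex" where
  "ac p s q t = (if p \<noteq> q \<and> s = t then 1 else 0)"

lemma ferm_CAR': "s < N \<Longrightarrow> t < N \<Longrightarrow> opmul N (ferm N p s) (ferm N q t) + opmul N (ferm N q t) (ferm N p s)
   = smul (ac p s q t) (opid N)"
  using ferm_CAR by (simp add: ac_def)

lemma comm_ferm:
  assumes "s1 < N" "s2 < N" "s3 < N" "s4 < N"
  shows "comm N (opmul N (ferm N p1 s1) (ferm N p2 s2)) (opmul N (ferm N p3 s3) (ferm N p4 s4)) =
     smul (ac p2 s2 p3 s3) (opmul N (ferm N p1 s1) (ferm N p4 s4))
   - smul (ac p1 s1 p3 s3) (opmul N (ferm N p2 s2) (ferm N p4 s4))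
   + smul (ac p2 s2 p4 s4) (opmul N (ferm N p3 s3) (ferm N p1 s1))
   - smul (ac p1 s1 p4 s4) (opmul N (ferm N p3 s3) (ferm N p2 s2))"
  by (rule comm4) (simp_all add: assms ferm_CAR')

lemma no_same: "s < N \<Longrightarrow> opmul N (ferm N p s) (ferm N p s) = 0"
proof -
  assume s: "s < N"
  have "opmul N (ferm N p s) (ferm N p s) + opmul N (ferm N p s) (ferm N p s) = 0"
    using ferm_CAR'[OF s s, of p p] by (simp add: ac_def)
  then have "(2::complex) * opmul N (ferm N p s) (ferm N p s) a b = 0" for a b
    by (drule_tac fun_cong[where x = a]) (drule_tac fun_cong[where x = b], simp)
  then show ?thesis by (intro ext) simp
qed

lemma no_swap: "t < s \<Longrightarrow> s < N \<Longrightarrow> opmul N (ferm N p s) (ferm N p t) = - opmul N (ferm N p t) (ferm N p s)"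
  using ferm_CAR'[of s N t p p] by (simp add: ac_def eq_neg_iff_add_eq_0)

lemma no_ad: "s < N \<Longrightarrow> t < N \<Longrightarrow> opmul N (ferm N False s) (ferm N True t) =
   smul (if s = t then 1 else 0) (opid N) - opmul N (ferm N True t) (ferm N False s)"
  using ferm_CAR'[of s N t False True] by (simp add: ac_def eq_diff_eq)

lemma cdag_ferm: "cdag N (Suc t) = ferm N True t" by (simp add: ferm_def)
lemma cann_ferm: "cann N (Suc t) = ferm N False t" by (simp add: ferm_def)

lemma e_ferm: "Suc t < N \<Longrightarrow> e_op N (Suc t) =
   - opmul N (ferm N True (Suc t)) (ferm N False t) - opmul N (ferm N True t) (ferm N False (Suc t))
   + smul \<i> (opmul N (ferm N True t) (ferm N False t)) - smul \<i> (opmul N (ferm N True (Suc t)) (ferm N False (Suc t)))"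
  unfolding e_op_def by (simp add: cdag_ferm[symmetric] cann_ferm[symmetric] no_ad[unfolded ferm_def, simplified] smul_diff)



lemma WB_ferm: "WB N \<alpha> (Suc u) = (case \<alpha> of
     APlus \<Rightarrow> smul ((-1) ^ Suc u)
        (opmul N (ferm N True u) (ferm N True (Suc u)) + smul \<i> (opmul N (ferm N True u) (ferm N True (Suc (Suc u))))
         - opmul N (ferm N True (Suc u)) (ferm N True (Suc (Suc u))))
   | AZero \<Rightarrow> smul (-1/2)
        (opid N + smul \<i> (opmul N (ferm N True u) (ferm N False (Suc u)))
         - opmul N (ferm N True u) (ferm N False (Suc (Suc u)))
         + smul \<i> (opmul N (ferm N True (Suc u)) (ferm N False u))
         - smul 2 (opmul N (ferm N True (Suc u)) (ferm N False (Suc u)))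
         - smul \<i> (opmul N (ferm N True (Suc u)) (ferm N False (Suc (Suc u))))
         - opmul N (ferm N True (Suc (Suc u))) (ferm N False u)
         - smul \<i> (opmul N (ferm N True (Suc (Suc u))) (ferm N False (Suc u))))
   | AMinus \<Rightarrow> smul ((-1) ^ (Suc (Suc u)))
        (opmul N (ferm N False u) (ferm N False (Suc u)) + smul \<i> (opmul N (ferm N False u) (ferm N False (Suc (Suc u))))
         - opmul N (ferm N False (Suc u)) (ferm N False (Suc (Suc u)))))"
proof -
  have e1: "Suc u + 1 = Suc (Suc u)" and e2: "Suc u + 2 = Suc (Suc (Suc u))" by simp_all
  show ?thesis unfolding WB_def by (simp only: e1 e2 cdag_ferm cann_ferm)
qed

lemmas comm_lin = comm_add_left comm_add_right comm_diff_left comm_diff_right comm_uminus_left comm_uminus_right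
  comm_smul_left comm_smul_right
lemmas smul_lin = smul_add smul_diff smul_uminus smul_smul
lemmas app_simps = plus_fun_apply minus_fun_apply2 uminus_fun_apply2 smul_apply zero_fun_apply

lemma comm_ff_opid: "s < N \<Longrightarrow> t < N \<Longrightarrow> comm N (opmul N (ferm N p s) (ferm N q t)) (opid N) = 0"
  by (simp add: comm_opid_right)

lemma F_same:
  assumes "Suc (Suc u) < N"
  shows "comm N (e_op N (Suc u)) (WB N \<alpha> (Suc u)) = 0"
proof -
  have n: "u < N" "Suc u < N" "Suc (Suc u) < N" using assms by auto
  show ?thesis
  proof (cases \<alpha>)
    case APlus then show ?thesis
    apply (simp only: e_ferm WB_ferm alpha.case n)
    apply (simp only: comm_lin comm_ferm comm_ff_opid n)
    apply (simp add: ac_def smul_lin no_same no_swap no_ad n)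
    apply (rule op_eqI, simp add: app_simps algebra_simps)?
    done
  next
    case AZero then show ?thesis
    apply (simp only: e_ferm WB_ferm alpha.case n)
    apply (simp only: comm_lin comm_ferm comm_ff_opid n)
    apply (simp add: ac_def smul_lin no_same no_swap no_ad n)
    apply (rule op_eqI, simp add: app_simps algebra_simps)?
    done
  next
    case AMinus then show ?thesis
    apply (simp only: e_ferm WB_ferm alpha.case n)
    apply (simp only: comm_lin comm_ferm comm_ff_opid n)
    apply (simp add: ac_def smul_lin no_same no_swap no_ad n)
    apply (rule op_eqI, simp add: app_simps algebra_simps)?
    done
  qed
qed

lemma F_next:
  assumes "Suc (Suc u) < N"
  shows "comm N (e_op N (Suc (Suc u))) (WB N \<alpha> (Suc u)) = 0"
proof -
  have n: "u < N" "Suc u < N" "Suc (Suc u) < N" using assms by auto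
  show ?thesis
  proof (cases \<alpha>)
    case APlus then show ?thesis
    apply (simp only: e_ferm WB_ferm alpha.case n)
    apply (simp only: comm_lin comm_ferm comm_ff_opid n)
    apply (simp add: ac_def smul_lin no_same no_swap no_ad n)
    apply (rule op_eqI, simp add: app_simps algebra_simps)?
    done
  next
    case AZero then show ?thesis
    apply (simp only: e_ferm WB_ferm alpha.case n)
    apply (simp only: comm_lin comm_ferm comm_ff_opid n)
    apply (simp add: ac_def smul_lin no_same no_swap no_ad n)
    apply (rule op_eqI, simp add: app_simps algebra_simps)?
    done
  next
    case AMinus then show ?thesis
    apply (simp only: e_ferm WB_ferm alpha.case n)
    apply (simp only: comm_lin comm_ferm comm_ff_opid n)
    apply (simp add: ac_def smul_lin no_same no_swap no_ad n)
    apply (rule op_eqI, simp add: app_simps algebra_simps)?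
    done
  qed
qed

lemma F_farL:
  assumes "Suc (Suc u) < N" "Suc (Suc t) \<le> u"
  shows "comm N (e_op N (Suc t)) (WB N \<alpha> (Suc u)) = 0"
proof -
  have n: "u < N" "Suc u < N" "Suc (Suc u) < N" "t < N" "Suc t < N" "t \<noteq> u" "t \<noteq> Suc u" "t \<noteq> Suc (Suc u)" "Suc t \<noteq> u" "Suc t \<noteq> Suc u" "Suc t \<noteq> Suc (Suc u)" using assms by auto
  show ?thesis
  proof (cases \<alpha>)
    case APlus then show ?thesis
    apply (simp only: e_ferm WB_ferm alpha.case n)
    apply (simp only: comm_lin comm_ferm comm_ff_opid n)
    apply (simp add: ac_def smul_lin no_same no_swap no_ad n)
    apply (rule op_eqI, simp add: app_simps algebra_simps)?
    done
  next
    case AZero then show ?thesis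
    apply (simp only: e_ferm WB_ferm alpha.case n)
    apply (simp only: comm_lin comm_ferm comm_ff_opid n)
    apply (simp add: ac_def smul_lin no_same no_swap no_ad n)
    apply (rule op_eqI, simp add: app_simps algebra_simps)?
    done
  next
    case AMinus then show ?thesis
    apply (simp only: e_ferm WB_ferm alpha.case n)
    apply (simp only: comm_lin comm_ferm comm_ff_opid n)
    apply (simp add: ac_def smul_lin no_same no_swap no_ad n)
    apply (rule op_eqI, simp add: app_simps algebra_simps)?
    done
  qed
qed

lemma F_farR:
  assumes "Suc t < N" "Suc (Suc (Suc u)) \<le> t"
  shows "comm N (e_op N (Suc t)) (WB N \<alpha> (Suc u)) = 0"
proof -
  have n: "u < N" "Suc u < N" "Suc (Suc u) < N" "t < N" "Suc t < N" "t \<noteq> u" "t \<noteq> Suc u" "t \<noteq> Suc (Suc u)" "Suc t \<noteq> u" "Suc t \<noteq> Suc u" "Suc t \<noteq> Suc (Suc u)" using assms by auto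
  show ?thesis
  proof (cases \<alpha>)
    case APlus then show ?thesis
    apply (simp only: e_ferm WB_ferm alpha.case n)
    apply (simp only: comm_lin comm_ferm comm_ff_opid n)
    apply (simp add: ac_def smul_lin no_same no_swap no_ad n)
    apply (rule op_eqI, simp add: app_simps algebra_simps)?
    done
  next
    case AZero then show ?thesis
    apply (simp only: e_ferm WB_ferm alpha.case n)
    apply (simp only: comm_lin comm_ferm comm_ff_opid n)
    apply (simp add: ac_def smul_lin no_same no_swap no_ad n)
    apply (rule op_eqI, simp add: app_simps algebra_simps)?
    done
  next
    case AMinus then show ?thesis
    apply (simp only: e_ferm WB_ferm alpha.case n)
    apply (simp only: comm_lin comm_ferm comm_ff_opid n)
    apply (simp add: ac_def smul_lin no_same no_swap no_ad n)
    apply (rule op_eqI, simp add: app_simps algebra_simps)?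
    done
  qed
qed

lemma F_two:
  assumes "Suc (Suc (Suc u)) < N"
  shows "comm N (e_op N (Suc (Suc (Suc u)))) (WB N \<alpha> (Suc u)) = - comm N (e_op N (Suc u)) (WB N \<alpha> (Suc (Suc u)))"
proof -
  have n: "u < N" "Suc u < N" "Suc (Suc u) < N" "Suc (Suc (Suc u)) < N" using assms by auto
  show ?thesis
  proof (cases \<alpha>)
    case APlus then show ?thesis
    apply (simp only: e_ferm WB_ferm alpha.case n)
    apply (simp only: comm_lin comm_ferm comm_ff_opid n)
    apply (simp add: ac_def smul_lin no_same no_swap no_ad n)
    apply (rule op_eqI, simp add: app_simps algebra_simps)?
    done
  next
    case AZero then show ?thesis
    apply (simp only: e_ferm WB_ferm alpha.case n)
    apply (simp only: comm_lin comm_ferm comm_ff_opid n)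
    apply (simp add: ac_def smul_lin no_same no_swap no_ad n)
    apply (rule op_eqI, simp add: app_simps algebra_simps)?
    done
  next
    case AMinus then show ?thesis
    apply (simp only: e_ferm WB_ferm alpha.case n)
    apply (simp only: comm_lin comm_ferm comm_ff_opid n)
    apply (simp add: ac_def smul_lin no_same no_swap no_ad n)
    apply (rule op_eqI, simp add: app_simps algebra_simps)?
    done
  qed
qed



lemma smul_diff_coef: "smul (a - b) X = smul a X - smul b X"
  unfolding smul_def fun_diff_def by (simp add: left_diff_distrib)
lemma smul_add_coef: "smul (a + b) X = smul a X + smul b X"
  unfolding smul_def plus_fun_def by (simp add: distrib_right)

lemma A_struct:
  assumes "1 \<le> j" "j \<le> N - 1" "1 \<le> l" "l \<le> N - 2"
  shows "comm N (e_op N j) (WB N \<alpha> l) =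
    (if j + 1 = l then comm N (e_op N (l - 1)) (WB N \<alpha> l) else 0)
  + (if j = l + 2 then - comm N (e_op N l) (WB N \<alpha> (l + 1)) else 0)"
proof -
  obtain t where t: "j = Suc t" using assms(1) by (cases j) auto
  obtain u where u: "l = Suc u" using assms(3) by (cases l) auto
  have tN: "Suc t < N" using assms t by auto
  have uN: "Suc (Suc u) < N" using assms u by auto
  consider "Suc (Suc t) \<le> u" | "Suc t = u" | "t = u" | "t = Suc u" | "t = Suc (Suc u)" | "Suc (Suc (Suc u)) \<le> t"
    by linarith
  then show ?thesis
  proof cases
    case 1 then show ?thesis using F_farL[OF uN 1] t u by simp
  next
    case 2 then show ?thesis using t u by simp
  next
    case 3 then show ?thesis using F_same[OF uN] t u by simp
  next
    case 4 then show ?thesis using F_next[OF uN] t u by simp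
  next
    case 5
    have "Suc (Suc (Suc u)) < N" using tN 5 by simp
    from F_two[OF this] show ?thesis using 5 t u by simp
  next
    case 6 then show ?thesis using F_farR[OF tN 6] t u by simp
  qed
qed

lemma sum_struct:
  fixes A :: "nat \<Rightarrow> nat \<Rightarrow> op" and s t :: "nat \<Rightarrow> complex"
  assumes N3: "3 \<le> N"
  and hA: "\<And>j l. 1 \<le> j \<Longrightarrow> j \<le> N - 1 \<Longrightarrow> 1 \<le> l \<Longrightarrow> l \<le> N - 2 \<Longrightarrow>
     A j l = (if j + 1 = l then A (l - 1) l else 0) + (if j = l + 2 then - A l (l + 1) else 0)"
  shows "(\<Sum>l\<in>{1..N-2}. \<Sum>j\<in>{1..N-1}. smul (t l) (smul (s j) (A j l))) =
     (\<Sum>p\<in>{2..N-2}. smul (t p * s (p - 1) - t (p - 1) * s (p + 1)) (A (p - 1) p))"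
proof -
  have inner: "(\<Sum>j\<in>{1..N-1}. smul (t l) (smul (s j) (A j l))) =
      (if 2 \<le> l then smul (t l * s (l - 1)) (A (l - 1) l) else 0)
    - (if l + 3 \<le> N then smul (t l * s (l + 2)) (A l (l + 1)) else 0)"
    if l: "l \<in> {1..N-2}" for l
  proof -
    have "(\<Sum>j\<in>{1..N-1}. smul (t l) (smul (s j) (A j l))) =
       (\<Sum>j\<in>{1..N-1}. (if j = l - 1 then (if 2 \<le> l then smul (t l * s (l - 1)) (A (l - 1) l) else 0) else 0)
                    + (if j = l + 2 then - smul (t l * s (l + 2)) (A l (l + 1)) else 0))"
    proof (intro sum.cong refl)
      fix j assume j: "j \<in> {1..N-1}"
      show "smul (t l) (smul (s j) (A j l)) =
        (if j = l - 1 then (if 2 \<le> l then smul (t l * s (l - 1)) (A (l - 1) l) else 0) else 0)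
                    + (if j = l + 2 then - smul (t l * s (l + 2)) (A l (l + 1)) else 0)"
        using hA[of j l] j l by (auto simp: smul_smul smul_add smul_uminus)
    qed
    also have "\<dots> = (if 2 \<le> l then smul (t l * s (l - 1)) (A (l - 1) l) else 0)
    - (if l + 3 \<le> N then smul (t l * s (l + 2)) (A l (l + 1)) else 0)"
    proof -
      have fin: "finite {1..N-1}" by simp
      have a: "(\<Sum>j\<in>{1..N-1}. (if j = l - 1 then (if 2 \<le> l then smul (t l * s (l - 1)) (A (l - 1) l) else 0) else 0))
           = (if 2 \<le> l then smul (t l * s (l - 1)) (A (l - 1) l) else 0)"
        unfolding sum.delta[OF fin] using l by auto
      have b: "(\<Sum>j\<in>{1..N-1}. (if j = l + 2 then - smul (t l * s (l + 2)) (A l (l + 1)) else 0))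
           = - (if l + 3 \<le> N then smul (t l * s (l + 2)) (A l (l + 1)) else 0)"
        unfolding sum.delta[OF fin] using l by auto
      show ?thesis unfolding sum.distrib a b by simp
    qed
    finally show ?thesis .
  qed
  have "(\<Sum>l\<in>{1..N-2}. \<Sum>j\<in>{1..N-1}. smul (t l) (smul (s j) (A j l))) =
     (\<Sum>l\<in>{1..N-2}. (if 2 \<le> l then smul (t l * s (l - 1)) (A (l - 1) l) else 0))
   - (\<Sum>l\<in>{1..N-2}. (if l + 3 \<le> N then smul (t l * s (l + 2)) (A l (l + 1)) else 0))"
    using inner by (simp add: sum_subtractf)
  also have "(\<Sum>l\<in>{1..N-2}. (if 2 \<le> l then smul (t l * s (l - 1)) (A (l - 1) l) else 0)) =
      (\<Sum>l\<in>{2..N-2}. smul (t l * s (l - 1)) (A (l - 1) l))"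
  proof -
    have e: "{l \<in> {1..N-2}. 2 \<le> l} = {2..N-2}" by auto
    show ?thesis by (subst sum.inter_filter[symmetric]) (simp_all only: finite_atLeastAtMost e)
  qed
  also have "(\<Sum>l\<in>{1..N-2}. (if l + 3 \<le> N then smul (t l * s (l + 2)) (A l (l + 1)) else 0)) =
      (\<Sum>l\<in>{1..N-3}. smul (t l * s (l + 2)) (A l (l + 1)))"
  proof -
    have e: "{l \<in> {1..N-2}. l + 3 \<le> N} = {1..N-3}" using N3 by auto
    show ?thesis by (subst sum.inter_filter[symmetric]) (simp_all only: finite_atLeastAtMost e)
  qed
  also have "\<dots> = (\<Sum>p\<in>{2..N-2}. smul (t (p - 1) * s (p + 1)) (A (p - 1) p))"
  proof -
    have eq: "N - 3 + 1 = N - 2" using N3 by simp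
    have "(\<Sum>p\<in>{1+1..N-3+1}. smul (t (p - 1) * s (p + 1)) (A (p - 1) p)) =
          (\<Sum>l\<in>{1..N-3}. smul (t (l + 1 - 1) * s (l + 1 + 1)) (A (l + 1 - 1) (l + 1)))"
      by (rule sum.shift_bounds_cl_nat_ivl)
    then show ?thesis unfolding eq one_add_one by simp
  qed
  finally show ?thesis by (simp add: sum_subtractf[symmetric] smul_diff_coef)
qed



lemma trig_core:
  fixes M K P x :: real
  shows "cos (M*(2*P+1)*x) * cos (2*K*(P-1)*x) - cos (M*(2*P-1)*x) * cos (2*K*(P+1)*x)
       = sin ((2*K-M)*x) * sin (2*(K+M)*P*x) + sin ((2*K+M)*x) * sin (2*(K-M)*P*x)"
proof -
  have c1: "cos (M*(2*P+1)*x - 2*K*(P-1)*x) = cos ((2*K+M)*x - 2*(K-M)*P*x)"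
    by (rule arg_cong[where f=cos]) (simp add: algebra_simps)
  have c2: "cos (M*(2*P+1)*x + 2*K*(P-1)*x) = cos ((2*K-M)*x - 2*(K+M)*P*x)"
  proof -
    have "M*(2*P+1)*x + 2*K*(P-1)*x = - ((2*K-M)*x - 2*(K+M)*P*x)" by (simp add: algebra_simps)
    then show ?thesis by (simp only: cos_minus)
  qed
  have c3: "cos (M*(2*P-1)*x - 2*K*(P+1)*x) = cos ((2*K+M)*x + 2*(K-M)*P*x)"
  proof -
    have "M*(2*P-1)*x - 2*K*(P+1)*x = - ((2*K+M)*x + 2*(K-M)*P*x)" by (simp add: algebra_simps)
    then show ?thesis by (simp only: cos_minus)
  qed
  have c4: "cos (M*(2*P-1)*x + 2*K*(P+1)*x) = cos ((2*K-M)*x + 2*(K+M)*P*x)"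
    by (rule arg_cong[where f=cos]) (simp add: algebra_simps)
  show ?thesis
    unfolding cos_times_cos sin_times_sin c1 c2 c3 c4 by (simp add: field_simps)
qed

lemma trig_diff:
  fixes K P x :: real
  shows "cos (K*(2*P+1)*x) - cos (K*(2*P-1)*x) = - 2 * sin (2*K*P*x) * sin (K*x)"
proof -
  have a: "(K*(2*P+1)*x + K*(2*P-1)*x) / 2 = 2*K*P*x" by (simp add: algebra_simps)
  have b: "(K*(2*P-1)*x - K*(2*P+1)*x) / 2 = - (K*x)" by (simp add: algebra_simps)
  show ?thesis unfolding cos_diff_cos a b by simp
qed

lemma trig_final:
  fixes n m :: int and N p :: nat
  assumes N: "N > 0" and p: "1 \<le> p"
    and s1: "sin (pi * real_of_int (n + m) / (2 * real N)) \<noteq> 0"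
    and s2: "sin (pi * real_of_int (n - m) / (2 * real N)) \<noteq> 0"
  shows "cos (pi * real_of_int m * (real p + 1/2) / real N) * cos (pi * real_of_int n * real (p - 1) / real N)
       - cos (pi * real_of_int m * (real (p - 1) + 1/2) / real N) * cos (pi * real_of_int n * real (p + 1) / real N)
     = 2 * sin (pi * real_of_int (2 * n - m) / (2 * real N)) * (- 1 / (4 * sin (pi * real_of_int (n + m) / (2 * real N))))
         * (cos (pi * real_of_int (n + m) * (real p + 1/2) / real N) - cos (pi * real_of_int (n + m) * (real (p - 1) + 1/2) / real N))
     + 2 * sin (pi * real_of_int (2 * n + m) / (2 * real N)) * (- 1 / (4 * sin (pi * real_of_int (n - m) / (2 * real N))))
         * (cos (pi * real_of_int (n - m) * (real p + 1/2) / real N) - cos (pi * real_of_int (n - m) * (real (p - 1) + 1/2) / real N))"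
proof -
  define x where "x = pi / (2 * real N)"
  define M where "M = real_of_int m"
  define K where "K = real_of_int n"
  define P where "P = real p"
  have Np: "real N > 0" using N by simp
  have rp1: "real (p - 1) = P - 1" using p by (simp add: P_def of_nat_diff)
  have rp2: "real (p + 1) = P + 1" by (simp add: P_def)
  have a1: "pi * real_of_int m * (real p + 1/2) / real N = M*(2*P+1)*x"
    unfolding x_def M_def P_def using Np by (simp add: field_simps)
  have a2: "pi * real_of_int n * real (p - 1) / real N = 2*K*(P-1)*x"
    unfolding x_def K_def rp1 using Np by (simp add: field_simps)
  have a3: "pi * real_of_int m * (real (p - 1) + 1/2) / real N = M*(2*P-1)*x"
    unfolding x_def M_def rp1 using Np by (simp add: field_simps)
  have a4: "pi * real_of_int n * real (p + 1) / real N = 2*K*(P+1)*x"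
    unfolding x_def K_def rp2 using Np by (simp add: field_simps)
  have a5: "pi * real_of_int (2 * n - m) / (2 * real N) = (2*K-M)*x"
    unfolding x_def K_def M_def using Np by (simp add: field_simps)
  have a6: "pi * real_of_int (2 * n + m) / (2 * real N) = (2*K+M)*x"
    unfolding x_def K_def M_def using Np by (simp add: field_simps)
  have a7: "pi * real_of_int (n + m) / (2 * real N) = (K+M)*x"
    unfolding x_def K_def M_def using Np by (simp add: field_simps)
  have a8: "pi * real_of_int (n - m) / (2 * real N) = (K-M)*x"
    unfolding x_def K_def M_def using Np by (simp add: field_simps)
  have a9: "pi * real_of_int (n + m) * (real p + 1/2) / real N = (K+M)*(2*P+1)*x"
    unfolding x_def K_def M_def P_def using Np by (simp add: field_simps)
  have a10: "pi * real_of_int (n + m) * (real (p - 1) + 1/2) / real N = (K+M)*(2*P-1)*x"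
    unfolding x_def K_def M_def rp1 using Np by (simp add: field_simps)
  have a11: "pi * real_of_int (n - m) * (real p + 1/2) / real N = (K-M)*(2*P+1)*x"
    unfolding x_def K_def M_def P_def using Np by (simp add: field_simps)
  have a12: "pi * real_of_int (n - m) * (real (p - 1) + 1/2) / real N = (K-M)*(2*P-1)*x"
    unfolding x_def K_def M_def rp1 using Np by (simp add: field_simps)
  have S1: "sin ((K+M)*x) \<noteq> 0" using s1 a7 by simp
  have S2: "sin ((K-M)*x) \<noteq> 0" using s2 a8 by simp
  show ?thesis
    unfolding a1 a2 a3 a4 a5 a6 a7 a8 a9 a10 a11 a12 trig_core trig_diff
    using S1 S2 by (simp add: field_simps)
qed



lemma comm_sums:
  fixes s t :: "nat \<Rightarrow> complex"
  assumes N3: "3 \<le> N"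
  shows "comm N (\<Sum>j\<in>{1..N-1}. smul (s j) (e_op N j)) (\<Sum>l\<in>{1..N-2}. smul (t l) (WB N \<alpha> l)) =
    (\<Sum>p\<in>{2..N-2}. smul (t p * s (p - 1) - t (p - 1) * s (p + 1)) (comm N (e_op N (p - 1)) (WB N \<alpha> p)))"
proof -
  have "comm N (\<Sum>j\<in>{1..N-1}. smul (s j) (e_op N j)) (\<Sum>l\<in>{1..N-2}. smul (t l) (WB N \<alpha> l)) =
     (\<Sum>l\<in>{1..N-2}. \<Sum>j\<in>{1..N-1}. smul (t l) (smul (s j) (comm N (e_op N j) (WB N \<alpha> l))))"
    by (simp only: comm_sum_left comm_sum_right comm_smul_left comm_smul_right smul_sum)
  also have "\<dots> =
    (\<Sum>p\<in>{2..N-2}. smul (t p * s (p - 1) - t (p - 1) * s (p + 1)) (comm N (e_op N (p - 1)) (WB N \<alpha> p)))"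
    by (rule sum_struct[OF N3, where A = "\<lambda>j l. comm N (e_op N j) (WB N \<alpha> l)"]) (rule A_struct; assumption)
  finally show ?thesis .
qed


lemma sin_nz:
  assumes N: "N > 0" and nd: "\<not> (2 * int N) dvd k"
  shows "sin (pi * real_of_int k / (2 * real N)) \<noteq> 0"
proof
  assume "sin (pi * real_of_int k / (2 * real N)) = 0"
  then obtain i :: int where i: "pi * real_of_int k / (2 * real N) = of_int i * pi"
    by (auto simp: sin_zero_iff_int2)
  then have "real_of_int k = real_of_int (2 * int N * i)" using N by (simp add: field_simps)
  then have "k = 2 * int N * i" by (simp only: of_int_eq_iff)
  then show False using nd by simp
qed

theorem mainTheorem6:
  fixes N :: nat and \<alpha> :: alpha and n m :: int
  assumes "N \<ge> 3"
    and "\<not> (2 * int N) dvd (n + m)" and "\<not> (2 * int N) dvd (n - m)"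
  shows "comm N (H0 N n) (W0 N \<alpha> m) =
           smul (of_real (2 * sin (pi * real_of_int (2 * n - m) / (2 * real N)))) (W1 N \<alpha> (n + m))
         + smul (of_real (2 * sin (pi * real_of_int (2 * n + m) / (2 * real N)))) (W1 N \<alpha> (n - m))"
proof -
  have N3: "3 \<le> N" and N0: "N > 0" using assms(1) by auto
  have S1: "sin (pi * real_of_int (n + m) / (2 * real N)) \<noteq> 0" by (rule sin_nz[OF N0 assms(2)])
  have S2: "sin (pi * real_of_int (n - m) / (2 * real N)) \<noteq> 0" by (rule sin_nz[OF N0 assms(3)])
  define Z where "Z p = comm N (e_op N (p - 1)) (WB N \<alpha> p)" for p
  have CS: "comm N (H0 N a) (W0 N \<alpha> b) = (\<Sum>p\<in>{2..N-2}.
      smul (of_real (cos (pi * real_of_int b * (real p + 1/2) / real N)) * of_real (cos (pi * real_of_int a * real (p - 1) / real N))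
          - of_real (cos (pi * real_of_int b * (real (p - 1) + 1/2) / real N)) * of_real (cos (pi * real_of_int a * real (p + 1) / real N)))
       (Z p))" for a b
    unfolding H0_def W0_def Z_def by (rule comm_sums[OF N3])
  have W1e: "W1 N \<alpha> k = (\<Sum>p\<in>{2..N-2}.
      smul (of_real (-1 / (4 * sin (pi * real_of_int k / (2 * real N)))) *
          (of_real (cos (pi * real_of_int k * (real p + 1/2) / real N))
          - of_real (cos (pi * real_of_int k * (real (p - 1) + 1/2) / real N)))) (Z p))" for k
    unfolding W1_def CS by (simp add: smul_sum smul_smul)
  show ?thesis
    unfolding CS W1e smul_sum smul_smul sum.distrib[symmetric] smul_add_coef[symmetric]
  proof (rule sum.cong[OF refl])
    fix p assume p: "p \<in> {2..N-2}"
    have R: "cos (pi * real_of_int m * (real p + 1/2) / real N) * cos (pi * real_of_int n * real (p - 1) / real N)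
       - cos (pi * real_of_int m * (real (p - 1) + 1/2) / real N) * cos (pi * real_of_int n * real (p + 1) / real N)
     = 2 * sin (pi * real_of_int (2 * n - m) / (2 * real N)) * (- 1 / (4 * sin (pi * real_of_int (n + m) / (2 * real N))))
         * (cos (pi * real_of_int (n + m) * (real p + 1/2) / real N) - cos (pi * real_of_int (n + m) * (real (p - 1) + 1/2) / real N))
     + 2 * sin (pi * real_of_int (2 * n + m) / (2 * real N)) * (- 1 / (4 * sin (pi * real_of_int (n - m) / (2 * real N))))
         * (cos (pi * real_of_int (n - m) * (real p + 1/2) / real N) - cos (pi * real_of_int (n - m) * (real (p - 1) + 1/2) / real N))"
      by (rule trig_final[OF N0 _ S1 S2]) (use p in auto)
    show "smul (of_real (cos (pi * real_of_int m * (real p + 1/2) / real N)) * of_real (cos (pi * real_of_int n * real (p - 1) / real N))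
          - of_real (cos (pi * real_of_int m * (real (p - 1) + 1/2) / real N)) * of_real (cos (pi * real_of_int n * real (p + 1) / real N))) (Z p)
       = smul (of_real (2 * sin (pi * real_of_int (2 * n - m) / (2 * real N))) *
              (of_real (-1 / (4 * sin (pi * real_of_int (n + m) / (2 * real N)))) *
               (of_real (cos (pi * real_of_int (n + m) * (real p + 1/2) / real N))
                - of_real (cos (pi * real_of_int (n + m) * (real (p - 1) + 1/2) / real N))))
            + of_real (2 * sin (pi * real_of_int (2 * n + m) / (2 * real N))) *
              (of_real (-1 / (4 * sin (pi * real_of_int (n - m) / (2 * real N)))) *
               (of_real (cos (pi * real_of_int (n - m) * (real p + 1/2) / real N))
                - of_real (cos (pi * real_of_int (n - m) * (real (p - 1) + 1/2) / real N))))) (Z p)"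
      using arg_cong[OF R, of complex_of_real] by (simp only: of_real_mult of_real_diff of_real_add mult.assoc)
  qed
qed


end
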